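(* The rotated terminal-set problem $\bar{\mathbb{P}}_T(x,\theta)$ is recursively feasible (under the terminal control law assumption below) and has the same set of minimizers as $\mathbb{P}_T(x,\theta)$.
   Context: Setting: $\mathcal{N}=\{1,\dots,\nu\}$; $\{\theta_k\}$ a time-homogeneous, irreducible, aperiodic Markov chain on $\mathcal{N}$ with transition matrix $P=(p_{ij})$ on a filtered probability space $(\Omega,\mathfrak{F},\{\mathfrak{F}_k\},\mathbb{P})$, $\mathfrak{F}_k$ generated by the history up to time $k$; system $x_{k+1}=f(x_k,u_k,\theta_k)$, with $x_k,\theta_k$ measured at time $k$; constraints $(x_k,u_k)\in Y_{\theta_k}$ ($Y_\theta$ nonempty compact); stage cost $\ell$, each $\ell(\cdot,\cdot,\theta)$ nonnegative, lower semicontinuous, level-bounded in $u$ locally uniformly in $x$; $f(\cdot,\cdot,\theta)$ continuous. $u\lhd\mathfrak{F}_k$ means $\mathfrak{F}_k$-measurable. Common optimal steady state $(x_s,u_s)=(0,0)$ for all modes with optimal steady-state cost $\ell_s$. A function $\lambda:\mathbb{R}^n\times\mathcal{N}\to\mathbb{R}$ (storage function of a stochastic dissipativity inequality) is given with $\lambda(x_s,\theta)=\lambda_s$ independent of $\theta$; terminal penalty $V_f:\mathbb{R}^n\times\mathcal{N}\to\mathbb{R}$ with $V_f(x_s,\theta)=V_f(x_s)$ independent of $\theta$. Define $\mathcal{L}\lambda(x_k,\theta_k):=\mathbb{E}[\lambda(x_{k+1},\theta_{k+1})-\lambda(x_k,\theta_k)\mid\mathfrak{F}_k]$ with $x_{k+1}=f(x_k,u_k,\theta_k)$,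 the rotated stage cost $L(x_k,u_k,\theta_k):=\ell(x_k,u_k,\theta_k)-\mathcal{L}\lambda(x_k,\theta_k)$, and the rotated terminal function $\tilde V_f(x,\theta):=V_f(x,\theta)+\lambda(x,\theta)-V_f(x_s)-\lambda_s$. Terminal control law assumption: there exist $\kappa_f$ and sets $X^f=\{X^f_i\}$ UPI for the constrained system in closed loop with $\kappa_f$ (i.e. $x_k\in X^f_{\theta_k}$ implies $x_{k+1}\in X^f_{\theta_{k+1}}$, constraints satisfied). $\mathbb{P}_T(x,\theta)$: minimize $\mathbb{E}[V_f(x_N,\theta_N)+\sum_{j=0}^{N-1}\ell(x_j,u_j,\theta_j)\mid\mathfrak{F}_0]$ over $(u_0,\dots,u_{N-1})$ subject to $x_{k+1}=f(x_k,u_k,\theta_k)$, $(x_k,u_k)\in Y_{\theta_k}$, $(x_0,\theta_0)=(x,\theta)$, $x_N\in X^f_{\theta_N}$, $u_k\lhd\mathfrak{F}_k$. $\bar{\mathbb{P}}_T(x,\theta)$: minimize $\mathbb{E}[\tilde V_f(x_N,\theta_N)+\sum_{j=0}^{N-1}L(x_j,u_j,\theta_j)\mid\mathfrak{F}_0]$ subject to the same constraints. *)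

theory Defs
  imports "HOL-Analysis.Analysis"
begin

fun mpow :: "('s::finite \<Rightarrow> 's \<Rightarrow> real) \<Rightarrow> nat \<Rightarrow> 's \<Rightarrow> 's \<Rightarrow> real" where
  "mpow P 0 i j = (if i = j then 1 else 0)"
| "mpow P (Suc n) i j = (\<Sum>k\<in>UNIV. mpow P n i k * P k j)"

definition stochastic_matrix :: "('s::finite \<Rightarrow> 's \<Rightarrow> real) \<Rightarrow> bool" where
  "stochastic_matrix P \<longleftrightarrow> (\<forall>i j. 0 \<le> P i j) \<and> (\<forall>i. (\<Sum>j\<in>UNIV. P i j) = 1)"

definition irreducible_chain :: "('s::finite \<Rightarrow> 's \<Rightarrow> real) \<Rightarrow> bool" where
  "irreducible_chain P \<longleftrightarrow> (\<forall>i j. \<exists>n>0. mpow P n i j > 0)"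

definition aperiodic_chain :: "('s::finite \<Rightarrow> 's \<Rightarrow> real) \<Rightarrow> bool" where
  "aperiodic_chain P \<longleftrightarrow> (\<forall>i. Gcd {n. n > 0 \<and> mpow P n i i > 0} = (1::nat))"

definition lsc :: "('a::topological_space \<Rightarrow> real) \<Rightarrow> bool" where
  "lsc g \<longleftrightarrow> (\<forall>x. \<forall>y < g x. eventually (\<lambda>z. y < g z) (at x))"

(* level-bounded in u locally uniformly in x (Rockafellar-Wets) *)
definition level_bounded_loc_unif ::
    "('a::metric_space \<Rightarrow> 'b::real_normed_vector \<Rightarrow> real) \<Rightarrow> bool" where
  "level_bounded_loc_unif g \<longleftrightarrow>
     (\<forall>x \<alpha>. \<exists>e>0. bounded {u. \<exists>x'\<in>ball x e. g x' u \<le> \<alpha>})"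

definition mode_paths :: "nat \<Rightarrow> 's \<Rightarrow> 's list set" where
  "mode_paths N \<theta> = {ts. length ts = Suc N \<and> hd ts = \<theta>}"

definition path_prob :: "('s \<Rightarrow> 's \<Rightarrow> real) \<Rightarrow> 's list \<Rightarrow> real" where
  "path_prob P ts = (\<Prod>j<length ts - 1. P (ts ! j) (ts ! Suc j))"

(* A control policy: u k hs is the input at time k given the mode history hs = [theta_0..theta_k];
   this is exactly an F_k-measurable input (x_0 being fixed, F_k is generated by theta_0..theta_k). *)
type_synonym ('s,'m) policy = "nat \<Rightarrow> 's list \<Rightarrow> 'm"

fun traj :: "('n \<Rightarrow> 'm \<Rightarrow> 's \<Rightarrow> 'n) \<Rightarrow> 'n \<Rightarrow> ('s,'m) policy \<Rightarrow> 's list \<Rightarrow> nat \<Rightarrow> 'n" where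
  "traj f x u ts 0 = x"
| "traj f x u ts (Suc k) = f (traj f x u ts k) (u k (take (Suc k) ts)) (ts ! k)"

(* feasibility of a policy: constraints and terminal constraint hold almost surely *)
definition admissible ::
    "('s::finite \<Rightarrow> 's \<Rightarrow> real) \<Rightarrow> ('n \<Rightarrow> 'm \<Rightarrow> 's \<Rightarrow> 'n) \<Rightarrow> ('s \<Rightarrow> ('n \<times> 'm) set)
     \<Rightarrow> ('s \<Rightarrow> 'n set) \<Rightarrow> nat \<Rightarrow> 'n \<Rightarrow> 's \<Rightarrow> ('s,'m) policy \<Rightarrow> bool" where
  "admissible P f Y Xf N x \<theta> u \<longleftrightarrow>
     (\<forall>ts\<in>mode_paths N \<theta>. path_prob P ts > 0 \<longrightarrow>
        (\<forall>k<N. (traj f x u ts k, u k (take (Suc k) ts)) \<in> Y (ts ! k))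
        \<and> traj f x u ts N \<in> Xf (ts ! N))"

definition exp_cost ::
    "('s::finite \<Rightarrow> 's \<Rightarrow> real) \<Rightarrow> ('n \<Rightarrow> 'm \<Rightarrow> 's \<Rightarrow> 'n) \<Rightarrow> ('n \<Rightarrow> 'm \<Rightarrow> 's \<Rightarrow> real)
     \<Rightarrow> ('n \<Rightarrow> 's \<Rightarrow> real) \<Rightarrow> nat \<Rightarrow> 'n \<Rightarrow> 's \<Rightarrow> ('s,'m) policy \<Rightarrow> real" where
  "exp_cost P f stage Vf N x \<theta> u =
     (\<Sum>ts\<in>mode_paths N \<theta>. path_prob P ts *
        (Vf (traj f x u ts N) (ts ! N)
         + (\<Sum>j<N. stage (traj f x u ts j) (u j (take (Suc j) ts)) (ts ! j))))"

definition minimizers ::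
    "('s::finite \<Rightarrow> 's \<Rightarrow> real) \<Rightarrow> ('n \<Rightarrow> 'm \<Rightarrow> 's \<Rightarrow> 'n) \<Rightarrow> ('s \<Rightarrow> ('n \<times> 'm) set)
     \<Rightarrow> ('s \<Rightarrow> 'n set) \<Rightarrow> ('n \<Rightarrow> 'm \<Rightarrow> 's \<Rightarrow> real) \<Rightarrow> ('n \<Rightarrow> 's \<Rightarrow> real)
     \<Rightarrow> nat \<Rightarrow> 'n \<Rightarrow> 's \<Rightarrow> ('s,'m) policy set" where
  "minimizers P f Y Xf stage Vf N x \<theta> =
     {u. admissible P f Y Xf N x \<theta> u \<and>
         (\<forall>v. admissible P f Y Xf N x \<theta> v \<longrightarrow>
              exp_cost P f stage Vf N x \<theta> u \<le> exp_cost P f stage Vf N x \<theta> v)}"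

(* L lambda (x,theta) = E[lambda(x_{k+1},theta_{k+1}) - lambda(x_k,theta_k) | F_k] *)
definition gen_L ::
    "('s::finite \<Rightarrow> 's \<Rightarrow> real) \<Rightarrow> ('n \<Rightarrow> 'm \<Rightarrow> 's \<Rightarrow> 'n) \<Rightarrow> ('n \<Rightarrow> 's \<Rightarrow> real)
     \<Rightarrow> 'n \<Rightarrow> 'm \<Rightarrow> 's \<Rightarrow> real" where
  "gen_L P f lam x u \<theta> = (\<Sum>j\<in>UNIV. P \<theta> j * lam (f x u \<theta>) j) - lam x \<theta>"

definition rot_stage ::
    "('s::finite \<Rightarrow> 's \<Rightarrow> real) \<Rightarrow> ('n \<Rightarrow> 'm \<Rightarrow> 's \<Rightarrow> 'n) \<Rightarrow> ('n \<Rightarrow> 'm \<Rightarrow> 's \<Rightarrow> real)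
     \<Rightarrow> ('n \<Rightarrow> 's \<Rightarrow> real) \<Rightarrow> 'n \<Rightarrow> 'm \<Rightarrow> 's \<Rightarrow> real" where
  "rot_stage P f l lam x u \<theta> = l x u \<theta> - gen_L P f lam x u \<theta>"

definition rot_term :: "('n \<Rightarrow> 's \<Rightarrow> real) \<Rightarrow> ('n \<Rightarrow> 's \<Rightarrow> real) \<Rightarrow> real \<Rightarrow> real \<Rightarrow> 'n \<Rightarrow> 's \<Rightarrow> real" where
  "rot_term Vf lam Vfs lams x \<theta> = Vf x \<theta> + lam x \<theta> - Vfs - lams"

end

theory Submission
  imports Defs
begin


lemma traj_take: "j \<le> m \<Longrightarrow> traj f x u (take m ts) j = traj f x u ts j"
  by (induction j) (auto simp: min_def)

lemma pp_pos_iff: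
  assumes "stochastic_matrix P"
  shows "path_prob P ts > 0 \<longleftrightarrow> (\<forall>j < length ts - 1. P (ts!j) (ts!Suc j) > 0)"
proof
  assume h: "path_prob P ts > 0"
  show "\<forall>j < length ts - 1. P (ts!j) (ts!Suc j) > 0"
  proof (intro allI impI, rule ccontr)
    fix j assume j: "j < length ts - 1" "\<not> 0 < P (ts ! j) (ts ! Suc j)"
    have "0 \<le> P (ts ! j) (ts ! Suc j)" using assms unfolding stochastic_matrix_def by blast
    then have "P (ts ! j) (ts ! Suc j) = 0" using j(2) by linarith
    then have "path_prob P ts = 0" unfolding path_prob_def using j
      by (metis (no_types, lifting) finite_lessThan lessThan_iff prod_zero_iff)
    then show False using h by simp
  qed
next
  assume "\<forall>j < length ts - 1. P (ts!j) (ts!Suc j) > 0"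
  then show "path_prob P ts > 0" unfolding path_prob_def by (intro prod_pos) auto
qed

lemma pp_snoc: "ts \<noteq> [] \<Longrightarrow> path_prob P (ts@[i]) = path_prob P ts * P (last ts) i"
proof -
  assume "ts \<noteq> []"
  then obtain m where m: "length ts = Suc m" by (cases ts) auto
  have "path_prob P (ts@[i]) = (\<Prod>j<Suc m. P ((ts@[i]) ! j) ((ts@[i]) ! Suc j))"
    unfolding path_prob_def using m by simp
  also have "\<dots> = (\<Prod>j<m. P ((ts@[i]) ! j) ((ts@[i]) ! Suc j)) * P ((ts@[i]) ! m) ((ts@[i]) ! Suc m)"
    by simp
  also have "(\<Prod>j<m. P ((ts@[i]) ! j) ((ts@[i]) ! Suc j)) = path_prob P ts"
    unfolding path_prob_def using m by (intro prod.cong) (auto simp: nth_append)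
  also have "P ((ts@[i]) ! m) ((ts@[i]) ! Suc m) = P (last ts) i"
    using m \<open>ts \<noteq> []\<close> by (simp add: nth_append last_conv_nth)
  finally show ?thesis .
qed

lemma mp_Suc: "mode_paths (Suc k) \<theta> = (\<lambda>(ts,i). ts@[i]) ` (mode_paths k \<theta> \<times> UNIV)"
proof (rule set_eqI, rule iffI)
  fix ts assume "ts \<in> mode_paths (Suc k) \<theta>"
  then have l: "length ts = Suc (Suc k)" "hd ts = \<theta>" by (auto simp: mode_paths_def)
  then have ne: "butlast ts \<noteq> []" by (cases ts) auto
  have "ts = butlast ts @ [last ts]" using l by (metis append_butlast_last_id list.size(3) nat.distinct(1))
  moreover have "hd (butlast ts) = \<theta>" using l ne
    by (metis \<open>ts = butlast ts @ [last ts]\<close> hd_append2)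
  ultimately show "ts \<in> (\<lambda>(ts,i). ts@[i]) ` (mode_paths k \<theta> \<times> UNIV)"
    using l by (auto simp: mode_paths_def intro!: image_eqI[where x="(butlast ts, last ts)"])
next
  fix ts assume "ts \<in> (\<lambda>(ts,i). ts@[i]) ` (mode_paths k \<theta> \<times> UNIV)"
  then show "ts \<in> mode_paths (Suc k) \<theta>"
    by (auto simp: mode_paths_def hd_append)
qed

lemma sum_mp_Suc: "(\<Sum>ts\<in>mode_paths (Suc k) \<theta>. H ts) = (\<Sum>ts\<in>mode_paths k \<theta>. \<Sum>i\<in>UNIV. H (ts@[i]))"
proof -
  have inj: "inj_on (\<lambda>(ts,i). ts@[i]) (mode_paths k \<theta> \<times> UNIV)"
    by (auto simp: inj_on_def)
  show ?thesis unfolding mp_Suc sum.reindex[OF inj] sum.cartesian_product by (simp add: case_prod_beta)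
qed

lemma marg:
  assumes sto: "stochastic_matrix (P::'s::finite \<Rightarrow> 's \<Rightarrow> real)"
  shows "k \<le> n \<Longrightarrow> (\<Sum>ts\<in>mode_paths n \<theta>. path_prob P ts * F (take (Suc k) ts))
     = (\<Sum>ts\<in>mode_paths k \<theta>. path_prob P ts * F ts)"
proof (induction n)
  case 0
  then show ?case by (intro sum.cong) (auto simp: mode_paths_def)
next
  case (Suc n)
  show ?case
  proof (cases "k = Suc n")
    case True
    then show ?thesis by (intro sum.cong) (auto simp: mode_paths_def)
  next
    case False
    then have kn: "k \<le> n" using Suc by simp
    have "(\<Sum>ts\<in>mode_paths (Suc n) \<theta>. path_prob P ts * F (take (Suc k) ts))
        = (\<Sum>ts\<in>mode_paths n \<theta>. \<Sum>i\<in>UNIV. path_prob P (ts@[i]) * F (take (Suc k) (ts@[i])))"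
      by (rule sum_mp_Suc)
    also have "\<dots> = (\<Sum>ts\<in>mode_paths n \<theta>. path_prob P ts * F (take (Suc k) ts) * (\<Sum>i\<in>UNIV. P (last ts) i))"
    proof (intro sum.cong refl)
      fix ts assume "ts \<in> mode_paths n \<theta>"
      then have l: "length ts = Suc n" by (simp add: mode_paths_def)
      then have ne: "ts \<noteq> []" by auto
      show "(\<Sum>i\<in>UNIV. path_prob P (ts@[i]) * F (take (Suc k) (ts@[i])))
          = path_prob P ts * F (take (Suc k) ts) * (\<Sum>i\<in>UNIV. P (last ts) i)"
        using l kn by (simp add: pp_snoc[OF ne] sum_distrib_left mult_ac)
    qed
    also have "\<dots> = (\<Sum>ts\<in>mode_paths n \<theta>. path_prob P ts * F (take (Suc k) ts))"
      using sto by (simp add: stochastic_matrix_def)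
    finally show ?thesis using Suc.IH[OF kn] by simp
  qed
qed


lemma tower:
  assumes sto: "stochastic_matrix (P::'s::finite \<Rightarrow> 's \<Rightarrow> real)" and j: "j < N"
  shows "(\<Sum>ts\<in>mode_paths N \<theta>. path_prob P ts *
            (\<Sum>i\<in>UNIV. P (ts!j) i * lam (traj f x u ts (Suc j)) i))
       = (\<Sum>ts\<in>mode_paths N \<theta>. path_prob P ts * lam (traj f x u ts (Suc j)) (ts ! Suc j))"
proof -
  define A where "A ts = (\<Sum>i\<in>UNIV. P (ts!j) i * lam (traj f x u ts (Suc j)) i)" for ts
  define B where "B ts = lam (traj f x u ts (Suc j)) (ts ! Suc j)" for ts
  have A: "A ts = A (take (Suc j) ts)" for ts
    unfolding A_def by (simp add: traj_take)
  have B: "B ts = B (take (Suc (Suc j)) ts)" for ts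
    unfolding B_def by (simp add: traj_take)
  have "(\<Sum>ts\<in>mode_paths N \<theta>. path_prob P ts * A ts) = (\<Sum>ts\<in>mode_paths j \<theta>. path_prob P ts * A ts)"
    using marg[OF sto, where k=j and n=N and F=A] j A by simp
  also have "\<dots> = (\<Sum>ts\<in>mode_paths j \<theta>. \<Sum>i\<in>UNIV. path_prob P (ts@[i]) * B (ts@[i]))"
  proof (intro sum.cong refl)
    fix ts assume "ts \<in> mode_paths j \<theta>"
    then have l: "length ts = Suc j" by (simp add: mode_paths_def)
    then have ne: "ts \<noteq> []" by auto
    have lt: "last ts = ts ! j" using l ne by (simp add: last_conv_nth)
    have tr: "traj f x u (ts@[i]) (Suc j) = traj f x u ts (Suc j)" for i
      using traj_take[of "Suc j" "Suc j" f x u "ts@[i]"] l by simp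
    have tr': "traj f x u (ts@[i]) j = traj f x u ts j" for i
      using traj_take[of j "Suc j" f x u "ts@[i]"] l by simp
    show "path_prob P ts * A ts = (\<Sum>i\<in>UNIV. path_prob P (ts@[i]) * B (ts@[i]))"
      unfolding A_def B_def using l
      by (simp add: pp_snoc[OF ne] lt tr tr' nth_append sum_distrib_left mult_ac)
  qed
  also have "\<dots> = (\<Sum>ts\<in>mode_paths (Suc j) \<theta>. path_prob P ts * B ts)"
    by (rule sum_mp_Suc[symmetric])
  also have "\<dots> = (\<Sum>ts\<in>mode_paths N \<theta>. path_prob P ts * B ts)"
    using marg[OF sto, where k="Suc j" and n=N and F=B] j B by simp
  finally show ?thesis unfolding A_def B_def .
qed

lemma cost_shift:
  assumes sto: "stochastic_matrix (P::'s::finite \<Rightarrow> 's \<Rightarrow> real)"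
  shows "exp_cost P f (rot_stage P f l lam) (rot_term Vf lam Vfs lams) N x \<theta> u
       = exp_cost P f l Vf N x \<theta> u
         + (\<Sum>ts\<in>mode_paths N \<theta>. path_prob P ts) * (lam x \<theta> - Vfs - lams)"
proof -
  define X where "X ts j = traj f x u ts j" for ts j
  define A where "A ts j = (\<Sum>i\<in>UNIV. P (ts!j) i * lam (X ts (Suc j)) i)" for ts j
  define B where "B ts j = lam (X ts (Suc j)) (ts ! Suc j)" for ts j
  define c where "c = lam x \<theta> - Vfs - lams"
  have path: "rot_term Vf lam Vfs lams (X ts N) (ts ! N)
        + (\<Sum>j<N. rot_stage P f l lam (X ts j) (u j (take (Suc j) ts)) (ts ! j))
      = Vf (X ts N) (ts ! N) + (\<Sum>j<N. l (X ts j) (u j (take (Suc j) ts)) (ts ! j))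
        + c + (\<Sum>j<N. B ts j - A ts j)"
    if ts: "ts \<in> mode_paths N \<theta>" for ts
  proof -
    have h: "hd ts = \<theta>" "ts \<noteq> []" using ts by (auto simp: mode_paths_def)
    have t0: "ts ! 0 = \<theta>" using h by (simp add: hd_conv_nth)
    have rs: "rot_stage P f l lam (X ts j) (u j (take (Suc j) ts)) (ts ! j)
        = l (X ts j) (u j (take (Suc j) ts)) (ts ! j) - A ts j + lam (X ts j) (ts ! j)" for j
      unfolding rot_stage_def gen_L_def A_def X_def by simp
    have tel: "(\<Sum>j<N. lam (X ts j) (ts ! j) - lam (X ts (Suc j)) (ts ! Suc j))
        = lam (X ts 0) (ts ! 0) - lam (X ts N) (ts ! N)"
      by (rule sum_lessThan_telescope')
    have x0: "X ts 0 = x" unfolding X_def by simp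
    show ?thesis
      unfolding rs sum.distrib sum_subtractf rot_term_def c_def B_def
      using tel x0 t0 by (simp add: sum_subtractf algebra_simps)
  qed
  have "exp_cost P f (rot_stage P f l lam) (rot_term Vf lam Vfs lams) N x \<theta> u
      = (\<Sum>ts\<in>mode_paths N \<theta>. path_prob P ts * (Vf (X ts N) (ts ! N)
          + (\<Sum>j<N. l (X ts j) (u j (take (Suc j) ts)) (ts ! j)))
          + path_prob P ts * c + (\<Sum>j<N. path_prob P ts * B ts j - path_prob P ts * A ts j))"
    unfolding exp_cost_def X_def[symmetric]
    by (intro sum.cong refl) (simp add: path algebra_simps sum_distrib_left sum_subtractf)
  also have "\<dots> = exp_cost P f l Vf N x \<theta> u + (\<Sum>ts\<in>mode_paths N \<theta>. path_prob P ts) * c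
      + (\<Sum>j<N. (\<Sum>ts\<in>mode_paths N \<theta>. path_prob P ts * B ts j) - (\<Sum>ts\<in>mode_paths N \<theta>. path_prob P ts * A ts j))"
    unfolding exp_cost_def X_def[symmetric] sum.distrib sum_distrib_right
    by (simp add: sum.swap[of _ "{..<N}"] sum_subtractf)
  also have "(\<Sum>j<N. (\<Sum>ts\<in>mode_paths N \<theta>. path_prob P ts * B ts j) - (\<Sum>ts\<in>mode_paths N \<theta>. path_prob P ts * A ts j)) = 0"
    by (intro sum.neutral ballI) (simp add: A_def B_def X_def tower[OF sto] del: traj.simps(2))
  finally show ?thesis by (simp add: c_def)
qed

lemma recfeas:
  fixes P :: "'s::finite \<Rightarrow> 's \<Rightarrow> real"
  assumes sto: "stochastic_matrix P"
    and term_UPI: "\<And>x \<theta>. x \<in> Xf \<theta> \<Longrightarrow>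
        (x, \<kappa>f x \<theta>) \<in> Y \<theta> \<and> (\<forall>\<theta>'. P \<theta> \<theta>' > 0 \<longrightarrow> f x (\<kappa>f x \<theta>) \<theta> \<in> Xf \<theta>')"
    and N: "0 < N" and adm: "admissible P f Y Xf N x \<theta> u" and pt: "P \<theta> \<theta>' > 0"
  shows "\<exists>v. admissible P f Y Xf N (f x (u 0 [\<theta>]) \<theta>) \<theta>' v"
proof -
  define x1 where "x1 = f x (u 0 [\<theta>]) \<theta>"
  define w where "w k hs = u (Suc k) (\<theta> # hs)" for k hs
  define v where "v k hs = (if k < N - 1 then w k hs else \<kappa>f (traj f x1 w hs k) (hs ! k))" for k hs
  have tw: "traj f x1 w ts k = traj f x u (\<theta> # ts) (Suc k)" for ts k
    by (induction k) (simp_all add: x1_def w_def)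
  have tv: "k \<le> N - 1 \<Longrightarrow> traj f x1 v ts k = traj f x1 w ts k" for ts k
    by (induction k) (simp_all add: v_def)
  have "admissible P f Y Xf N x1 \<theta>' v"
    unfolding admissible_def
  proof (intro ballI impI)
    fix ts assume ts: "ts \<in> mode_paths N \<theta>'" and pp: "path_prob P ts > 0"
    have l: "length ts = Suc N" "hd ts = \<theta>'" using ts by (auto simp: mode_paths_def)
    have t0: "ts ! 0 = \<theta>'" using l by (cases ts) auto
    have ppos: "\<forall>j < N. P (ts!j) (ts!Suc j) > 0" using pp pp_pos_iff[OF sto, of ts] l by simp
    define ts0 where "ts0 = \<theta> # take N ts"
    have ts0m: "ts0 \<in> mode_paths N \<theta>" using l by (simp add: ts0_def mode_paths_def)
    have "\<forall>j < length ts0 - 1. P (ts0!j) (ts0!Suc j) > 0"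
    proof (intro allI impI)
      fix j assume "j < length ts0 - 1"
      then have j: "j < N" using l by (simp add: ts0_def)
      show "P (ts0!j) (ts0!Suc j) > 0"
      proof (cases j)
        case 0 then show ?thesis using pt t0 j by (simp add: ts0_def)
      next
        case (Suc i) then show ?thesis using ppos j by (simp add: ts0_def)
      qed
    qed
    then have pp0: "path_prob P ts0 > 0" using pp_pos_iff[OF sto] by blast
    have A: "\<forall>k<N. (traj f x u ts0 k, u k (take (Suc k) ts0)) \<in> Y (ts0 ! k)"
      and B: "traj f x u ts0 N \<in> Xf (ts0 ! N)"
      using adm ts0m pp0 unfolding admissible_def by blast+
    have ts0t: "ts0 = take (Suc N) (\<theta> # ts)" by (simp add: ts0_def)
    have tr0: "traj f x u ts0 (Suc k) = traj f x1 w ts k" if "k < N" for k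
    proof -
      have "traj f x u ts0 (Suc k) = traj f x u (\<theta>#ts) (Suc k)"
        unfolding ts0t using that by (intro traj_take) simp
      then show ?thesis by (simp only: tw)
    qed
    define k0 where "k0 = N - 1"
    have Nk: "N = Suc k0" using N by (simp add: k0_def)
    have e1: "traj f x u ts0 N = traj f x1 w ts k0" using tr0[of k0] Nk by (simp del: traj.simps)
    have e2: "ts0 ! N = ts ! k0" using Nk by (simp add: ts0_def)
    have e3: "traj f x1 v ts k0 = traj f x1 w ts k0" by (rule tv) (simp add: k0_def)
    have X: "traj f x1 v ts k0 \<in> Xf (ts ! k0)"
      using B e1 e2 e3 by metis
    have nk: "\<not> k0 < N - 1" by (simp add: k0_def)
    have vk0: "v k0 (take (Suc k0) ts) = \<kappa>f (traj f x1 v ts k0) (ts ! k0)"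
      using e3 traj_take[of k0 "Suc k0" f x1 w ts] nk by (simp add: v_def del: traj.simps)
    show "(\<forall>k<N. (traj f x1 v ts k, v k (take (Suc k) ts)) \<in> Y (ts ! k)) \<and>
          traj f x1 v ts N \<in> Xf (ts ! N)"
    proof (intro conjI allI impI)
      fix k assume k: "k < N"
      show "(traj f x1 v ts k, v k (take (Suc k) ts)) \<in> Y (ts ! k)"
      proof (cases "k < k0")
        case True
        have "(traj f x u ts0 (Suc k), u (Suc k) (take (Suc (Suc k)) ts0)) \<in> Y (ts0 ! Suc k)"
          using A True Nk by auto
        moreover have "take (Suc (Suc k)) ts0 = \<theta> # take (Suc k) ts" using True Nk
          by (simp add: ts0_def min_def)
        moreover have "ts0 ! Suc k = ts ! k" using True Nk by (simp add: ts0_def)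
        moreover have "traj f x u ts0 (Suc k) = traj f x1 w ts k" using True Nk tr0[of k] by simp
        moreover have "traj f x1 v ts k = traj f x1 w ts k" by (rule tv) (use True in \<open>simp add: k0_def\<close>)
        moreover have "v k (take (Suc k) ts) = u (Suc k) (\<theta> # take (Suc k) ts)"
          using True by (simp add: v_def w_def k0_def)
        ultimately show ?thesis by (simp del: traj.simps)
      next
        case False
        then have "k = k0" using k Nk by simp
        then show ?thesis using term_UPI[OF X] vk0 by simp
      qed
    next
      have "traj f x1 v ts N = f (traj f x1 v ts k0) (\<kappa>f (traj f x1 v ts k0) (ts ! k0)) (ts ! k0)"
        using vk0 Nk by simp
      then show "traj f x1 v ts N \<in> Xf (ts ! N)"
        using term_UPI[OF X] ppos Nk by simp
    qed
  qed
  then show ?thesis unfolding x1_def by blast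
qed

theorem theorem4:
  fixes P :: "'s::finite \<Rightarrow> 's \<Rightarrow> real"
    and f :: "real^'n \<Rightarrow> real^'m \<Rightarrow> 's \<Rightarrow> real^'n"
    and Y :: "'s \<Rightarrow> ((real^'n) \<times> (real^'m)) set"
    and l :: "real^'n \<Rightarrow> real^'m \<Rightarrow> 's \<Rightarrow> real"
    and lam Vf :: "real^'n \<Rightarrow> 's \<Rightarrow> real"
    and lams Vfs ls :: real
    and \<kappa>f :: "real^'n \<Rightarrow> 's \<Rightarrow> real^'m"
    and Xf :: "'s \<Rightarrow> (real^'n) set"
  assumes chain: "stochastic_matrix P" "irreducible_chain P" "aperiodic_chain P"
    and Y_cpt: "\<And>\<theta>. compact (Y \<theta>) \<and> Y \<theta> \<noteq> {}"
    and f_cont: "\<And>\<theta>. continuous_on UNIV (\<lambda>(x,u). f x u \<theta>)"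
    and l_nonneg: "\<And>x u \<theta>. 0 \<le> l x u \<theta>"
    and l_lsc: "\<And>\<theta>. lsc (\<lambda>(x,u). l x u \<theta>)"
    and l_lb: "\<And>\<theta>. level_bounded_loc_unif (\<lambda>x u. l x u \<theta>)"
    and steady: "\<And>\<theta>. f 0 0 \<theta> = 0 \<and> (0, 0) \<in> Y \<theta>"
    and dissip: "\<And>x u \<theta>. (x, u) \<in> Y \<theta> \<Longrightarrow> gen_L P f lam x u \<theta> \<le> l x u \<theta> - ls"
    and lam_s: "\<And>\<theta>. lam 0 \<theta> = lams"
    and Vf_s: "\<And>\<theta>. Vf 0 \<theta> = Vfs"
    and term_UPI: "\<And>x \<theta>. x \<in> Xf \<theta> \<Longrightarrow>
        (x, \<kappa>f x \<theta>) \<in> Y \<theta> \<and> (\<forall>\<theta>'. P \<theta> \<theta>' > 0 \<longrightarrow> f x (\<kappa>f x \<theta>) \<theta> \<in> Xf \<theta>')"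
  shows
    "(\<forall>N x \<theta> u. 0 < N \<longrightarrow> admissible P f Y Xf N x \<theta> u \<longrightarrow>
        (\<forall>\<theta>'. P \<theta> \<theta>' > 0 \<longrightarrow>
           (\<exists>v. admissible P f Y Xf N (f x (u 0 [\<theta>]) \<theta>) \<theta>' v)))
     \<and> (\<forall>N x \<theta>.
          minimizers P f Y Xf (rot_stage P f l lam) (rot_term Vf lam Vfs lams) N x \<theta>
          = minimizers P f Y Xf l Vf N x \<theta>)"
proof (intro conjI allI impI)
  fix N x \<theta> u \<theta>'
  assume "0 < N" "admissible P f Y Xf N x \<theta> u" "P \<theta> \<theta>' > 0"
  then show "\<exists>v. admissible P f Y Xf N (f x (u 0 [\<theta>]) \<theta>) \<theta>' v"
    using recfeas[where \<kappa>f=\<kappa>f and Xf=Xf and Y=Y and f=f, OF chain(1) term_UPI] by blast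
next
  fix N x \<theta>
  show "minimizers P f Y Xf (rot_stage P f l lam) (rot_term Vf lam Vfs lams) N x \<theta>
          = minimizers P f Y Xf l Vf N x \<theta>"
    unfolding minimizers_def cost_shift[OF chain(1)] by simp
qed

end
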